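(* Let $G$ be a finite group. Then every character in $\mathrm{Irr}(G\mid U(G))$ is fully ramified with respect to $Z(G)$, and $U(G)$ is the largest subgroup of $G$ with this property: if $H\le G$ is any subgroup such that every character in $\mathrm{Irr}(G\mid H)$ is fully ramified with respect to $Z(G)$, then $H\le U(G)$.
   Context: All groups are finite. For a subgroup $H\le G$, $\mathrm{Irr}(G\mid H)$ is the set of $\chi\in\mathrm{Irr}(G)$ with $H\not\le\ker(\chi)$. A character $\chi\in\mathrm{Irr}(G)$ is fully ramified with respect to $Z(G)$ if $\chi_{Z(G)}=\chi(1)\lambda$ for some $\lambda\in\mathrm{Irr}(Z(G))$ and $\chi(1)^2=|G:Z(G)|$ (equivalently, $\chi$ vanishes on $G\setminus Z(G)$). For a normal subgroup $H$ of $G$, let $V(G\mid H)$ be the subgroup generated by all $g\in G$ such that $\chi(g)\neq 0$ for some $\chi\in\mathrm{Irr}(G\mid H)$ (with $V(G\mid 1)=1$). For a normal subgroup $N$ of $G$, let $U(G\mid N)$ be the product of all normal subgroups $H$ of $G$ with $V(G\mid H)\le N$. Define $U(G)=U(G\mid Z(G))$. *)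

theory Defs
  imports "HOL-Algebra.Algebra" "Jordan_Normal_Form.Matrix"
begin

definition group_center :: "('a, 'b) monoid_scheme \<Rightarrow> 'a set" where
  "group_center G = {z \<in> carrier G. \<forall>g \<in> carrier G. z \<otimes>\<^bsub>G\<^esub> g = g \<otimes>\<^bsub>G\<^esub> z}"

definition is_rep :: "('a, 'b) monoid_scheme \<Rightarrow> nat \<Rightarrow> ('a \<Rightarrow> complex mat) \<Rightarrow> bool" where
  "is_rep G n \<rho> \<longleftrightarrow>
     (\<forall>g \<in> carrier G. \<rho> g \<in> carrier_mat n n) \<and>
     \<rho> \<one>\<^bsub>G\<^esub> = 1\<^sub>m n \<and>
     (\<forall>g \<in> carrier G. \<forall>h \<in> carrier G. \<rho> (g \<otimes>\<^bsub>G\<^esub> h) = \<rho> g * \<rho> h)"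

definition invariant_subspace :: "('a, 'b) monoid_scheme \<Rightarrow> nat \<Rightarrow> ('a \<Rightarrow> complex mat) \<Rightarrow> complex vec set \<Rightarrow> bool" where
  "invariant_subspace G n \<rho> W \<longleftrightarrow>
     W \<subseteq> carrier_vec n \<and> 0\<^sub>v n \<in> W \<and>
     (\<forall>v \<in> W. \<forall>w \<in> W. v + w \<in> W) \<and>
     (\<forall>c. \<forall>v \<in> W. c \<cdot>\<^sub>v v \<in> W) \<and>
     (\<forall>g \<in> carrier G. \<forall>v \<in> W. \<rho> g *\<^sub>v v \<in> W)"

definition irreducible_rep :: "('a, 'b) monoid_scheme \<Rightarrow> nat \<Rightarrow> ('a \<Rightarrow> complex mat) \<Rightarrow> bool" where
  "irreducible_rep G n \<rho> \<longleftrightarrow> is_rep G n \<rho> \<and> n > 0 \<and>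
     (\<forall>W. invariant_subspace G n \<rho> W \<longrightarrow> W = {0\<^sub>v n} \<or> W = carrier_vec n)"

definition mat_trace :: "complex mat \<Rightarrow> complex" where
  "mat_trace A = (\<Sum>i<dim_row A. A $$ (i, i))"

definition Irr :: "('a, 'b) monoid_scheme \<Rightarrow> ('a \<Rightarrow> complex) set" where
  "Irr G = {\<chi>. \<exists>n \<rho>. irreducible_rep G n \<rho> \<and>
                 \<chi> = (\<lambda>g. if g \<in> carrier G then mat_trace (\<rho> g) else 0)}"

definition char_kernel :: "('a, 'b) monoid_scheme \<Rightarrow> ('a \<Rightarrow> complex) \<Rightarrow> 'a set" where
  "char_kernel G \<chi> = {g \<in> carrier G. \<chi> g = \<chi> \<one>\<^bsub>G\<^esub>}"

definition Irr_over :: "('a, 'b) monoid_scheme \<Rightarrow> 'a set \<Rightarrow> ('a \<Rightarrow> complex) set" where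
  "Irr_over G H = {\<chi> \<in> Irr G. \<not> H \<subseteq> char_kernel G \<chi>}"

definition fully_ramified :: "('a, 'b) monoid_scheme \<Rightarrow> ('a \<Rightarrow> complex) \<Rightarrow> bool" where
  "fully_ramified G \<chi> \<longleftrightarrow>
     (\<exists>lam \<in> Irr (G\<lparr>carrier := group_center G\<rparr>).
        \<forall>z \<in> group_center G. \<chi> z = \<chi> \<one>\<^bsub>G\<^esub> * lam z) \<and>
     (\<chi> \<one>\<^bsub>G\<^esub>)\<^sup>2 = of_nat (card (carrier G) div card (group_center G))"

definition V_sub :: "('a, 'b) monoid_scheme \<Rightarrow> 'a set \<Rightarrow> 'a set" where
  "V_sub G H = generate G {g \<in> carrier G. \<exists>\<chi> \<in> Irr_over G H. \<chi> g \<noteq> 0}"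

definition U_sub :: "('a, 'b) monoid_scheme \<Rightarrow> 'a set \<Rightarrow> 'a set" where
  "U_sub G N = generate G (\<Union>{H. H \<lhd> G \<and> V_sub G H \<subseteq> N})"

definition U_grp :: "('a, 'b) monoid_scheme \<Rightarrow> 'a set" where
  "U_grp G = U_sub G (group_center G)"

end

theory Submission
  imports Defs "Jordan_Normal_Form.Schur_Decomposition" "Jordan_Normal_Form.Determinant"
begin

lemma mult_entry:
  assumes "A \<in> carrier_mat n m" "B \<in> carrier_mat m p" "i < n" "j < p"
  shows "(A * B) $$ (i,j) = (\<Sum>k<m. A $$ (i,k) * B $$ (k,j))"
  using assms by (auto simp: scalar_prod_def lessThan_atLeast0 intro!: sum.cong)

lemma trace_comm:
  fixes A B :: "complex mat"
  assumes "A \<in> carrier_mat n m" "B \<in> carrier_mat m n"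
  shows "mat_trace (A * B) = mat_trace (B * A)"
proof -
  have "mat_trace (A * B) = (\<Sum>i<n. \<Sum>k<m. A $$ (i,k) * B $$ (k,i))"
    using assms unfolding mat_trace_def by (auto simp: scalar_prod_def lessThan_atLeast0 intro!: sum.cong)
  also have "\<dots> = (\<Sum>k<m. \<Sum>i<n. B $$ (k,i) * A $$ (i,k))"
    by (subst sum.swap) (simp add: mult.commute)
  also have "\<dots> = mat_trace (B * A)"
    using assms unfolding mat_trace_def by (auto simp: scalar_prod_def lessThan_atLeast0 intro!: sum.cong)
  finally show ?thesis .
qed

lemma trace_similar:
  fixes A B :: "complex mat"
  assumes "similar_mat_wit A B P Q"
  shows "mat_trace A = mat_trace B"
proof -
  let ?n = "dim_row A"
  note w = similar_mat_witD[OF refl assms]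
  note c = w(4-7) and PQ = w(2) and A = w(3)
  have e1: "P * B * Q = P * (B * Q)" by (rule assoc_mult_mat[OF c(3) c(2) c(4)])
  have e2: "(B * Q) * P = B * (Q * P)" by (rule assoc_mult_mat[OF c(2) c(4) c(3)])
  have "mat_trace A = mat_trace (P * (B * Q))" unfolding e1[symmetric] A[symmetric] ..
  also have "\<dots> = mat_trace ((B * Q) * P)" 
    by (rule trace_comm[OF c(3)], rule mult_carrier_mat[OF c(2) c(4)])
  also have "\<dots> = mat_trace B" unfolding e2 PQ right_mult_one_mat[OF c(2)] ..
  finally show ?thesis .
qed
lemma ut_mult:
  fixes A B :: "complex mat"
  assumes "A \<in> carrier_mat n n" "B \<in> carrier_mat n n" "upper_triangular A" "upper_triangular B"
  shows "upper_triangular (A * B)" "\<And>i. i < n \<Longrightarrow> (A * B) $$ (i,i) = A $$ (i,i) * B $$ (i,i)"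
proof -
  show "upper_triangular (A * B)"
    unfolding upper_triangular_def
  proof (intro allI impI)
    fix i j assume ij: "j < i" "i < dim_row (A * B)"
    hence "(A * B) $$ (i,j) = (\<Sum>k<n. A $$ (i,k) * B $$ (k,j))" using assms by (intro mult_entry[OF assms(1,2)]) auto
    also have "\<dots> = 0"
    proof (rule sum.neutral, rule ballI)
      fix k assume "k \<in> {..<n}"
      show "A $$ (i,k) * B $$ (k,j) = 0"
        using assms ij \<open>k \<in> {..<n}\<close> by (cases "k < i") (auto simp: upper_triangular_def)
    qed
    finally show "(A * B) $$ (i,j) = 0" .
  qed
  fix i assume i: "i < n"
  hence "(A * B) $$ (i,i) = (\<Sum>k<n. A $$ (i,k) * B $$ (k,i))" using assms by (intro mult_entry[OF assms(1,2)]) auto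
  also have "\<dots> = (\<Sum>k\<in>{i}. A $$ (i,k) * B $$ (k,i))"
  proof (rule sum.mono_neutral_right)
    show "\<forall>k\<in>{..<n} - {i}. A $$ (i, k) * B $$ (k, i) = 0"
    proof
      fix k assume "k \<in> {..<n} - {i}"
      thus "A $$ (i, k) * B $$ (k, i) = 0"
        using assms i by (cases "k < i") (auto simp: upper_triangular_def)
    qed
  qed (use i in auto)
  finally show "(A * B) $$ (i,i) = A $$ (i,i) * B $$ (i,i)" by simp
qed

lemma ut_pow:
  fixes B :: "complex mat"
  assumes "B \<in> carrier_mat n n" "upper_triangular B"
  shows "upper_triangular (B ^\<^sub>m k) \<and> (\<forall>i<n. (B ^\<^sub>m k) $$ (i,i) = (B $$ (i,i)) ^ k)"
proof (induct k)
  case 0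
  then show ?case using assms(1) by (auto simp: upper_triangular_def)
next
  case (Suc k)
  have c: "B ^\<^sub>m k \<in> carrier_mat n n" using assms by simp
  show ?case using ut_mult[OF c assms(1) _ assms(2)] Suc by simp
qed


lemma root_unity_norm:
  fixes d :: complex
  assumes "d ^ m = 1" "m > 0"
  shows "norm d = 1"
proof -
  have "norm d ^ m = 1" using assms(1) by (metis norm_one norm_power)
  thus ?thesis using assms(2) power_eq_imp_eq_base[of "norm d" m 1] by simp
qed

lemma root_unity_cnj:
  fixes d :: complex
  assumes "d ^ m = 1" "m > 0"
  shows "d ^ (m - 1) = cnj d"
proof -
  have n: "norm d = 1" by (rule root_unity_norm[OF assms])
  have d0: "d \<noteq> 0" using n by auto
  have "d ^ (m - 1) * d = 1" using assms by (metis Suc_diff_1 power_Suc2)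
  moreover have "cnj d * d = 1" using n by (metis complex_norm_square mult.commute norm_one of_real_1 power_one)
  ultimately show ?thesis using d0 by (metis mult_right_cancel)
qed

lemma finite_order_tri:
  fixes A :: "complex mat"
  assumes A: "A \<in> carrier_mat n n" and m: "m > 0" and Am: "A ^\<^sub>m m = 1\<^sub>m n"
  obtains B P Q where "similar_mat_wit A B P Q" "B \<in> carrier_mat n n" "upper_triangular B"
     "\<forall>i<n. (B $$ (i,i)) ^ m = 1"
proof -
  obtain es where es: "char_poly A = (\<Prod> a \<leftarrow> es. [:- a, 1:])"
    using char_poly_factorized[OF A] by blast
  define B where "B = schur_upper_triangular A es"
  note S = schur_upper_triangular[OF A es, folded B_def]
  obtain P Q where w: "similar_mat_wit A B P Q" using S(3) unfolding similar_mat_def by blast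
  note w' = similar_mat_witD2[OF A w]
  have "B ^\<^sub>m m = Q * A ^\<^sub>m m * P" by (rule similar_mat_wit_pow_id[OF similar_mat_wit_sym[OF w]])
  also have "\<dots> = 1\<^sub>m n" unfolding Am using w'(2,6,7) by simp
  finally have Bm: "B ^\<^sub>m m = 1\<^sub>m n" .
  have "\<forall>i<n. (B $$ (i,i)) ^ m = 1"
  proof (intro allI impI)
    fix i assume i: "i < n"
    have "(B ^\<^sub>m m) $$ (i,i) = (B $$ (i,i)) ^ m" using ut_pow[OF S(1,2)] i by blast
    thus "(B $$ (i,i)) ^ m = 1" using Bm i by simp
  qed
  thus ?thesis using that w S by blast
qed

lemma trace_pow_tri:
  fixes A :: "complex mat"
  assumes w: "similar_mat_wit A B P Q" and A: "A \<in> carrier_mat n n" and B: "B \<in> carrier_mat n n"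
    and ut: "upper_triangular B"
  shows "mat_trace (A ^\<^sub>m k) = (\<Sum>i<n. (B $$ (i,i)) ^ k)"
proof -
  have "mat_trace (A ^\<^sub>m k) = mat_trace (B ^\<^sub>m k)" by (rule trace_similar[OF similar_mat_wit_pow[OF w]])
  also have "\<dots> = (\<Sum>i<n. (B $$ (i,i)) ^ k)"
    unfolding mat_trace_def using ut_pow[OF B ut, of k] B by (auto intro!: sum.cong)
  finally show ?thesis .
qed

lemma finite_order_trace_inv:
  fixes A :: "complex mat"
  assumes A: "A \<in> carrier_mat n n" and m: "m > 0" and Am: "A ^\<^sub>m m = 1\<^sub>m n"
  shows "mat_trace (A ^\<^sub>m (m - 1)) = cnj (mat_trace A)"
proof -
  obtain B P Q where w: "similar_mat_wit A B P Q" and B: "B \<in> carrier_mat n n" and ut: "upper_triangular B"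
     and d: "\<forall>i<n. (B $$ (i,i)) ^ m = 1" using finite_order_tri[OF A m Am] by blast
  have "mat_trace (A ^\<^sub>m (m - 1)) = (\<Sum>i<n. (B $$ (i,i)) ^ (m - 1))" by (rule trace_pow_tri[OF w A B ut])
  also have "\<dots> = (\<Sum>i<n. cnj (B $$ (i,i)))" 
  proof (rule sum.cong[OF refl])
    fix i assume "i \<in> {..<n}"
    thus "(B $$ (i,i)) ^ (m - 1) = cnj (B $$ (i,i))" using root_unity_cnj[of "B$$(i,i)" m] d m by auto
  qed
  also have "\<dots> = cnj (\<Sum>i<n. (B $$ (i,i)) ^ 1)" by simp
  also have "\<dots> = cnj (mat_trace (A ^\<^sub>m 1))" by (subst trace_pow_tri[OF w A B ut]) simp
  finally show ?thesis using A by simp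
qed


lemma root_unity_re_one:
  fixes d :: complex
  assumes "norm d = 1" "Re d = 1"
  shows "d = 1"
proof -
  have "(Re d)^2 + (Im d)^2 = 1" using assms(1) by (metis cmod_power2 power_one)
  hence "Im d = 0" using assms(2) by simp
  thus ?thesis using assms(2) by (simp add: complex_eq_iff)
qed

lemma finite_order_trace_one:
  fixes A :: "complex mat"
  assumes A: "A \<in> carrier_mat n n" and m: "m > 0" and Am: "A ^\<^sub>m m = 1\<^sub>m n"
    and tr: "mat_trace A = of_nat n"
  shows "A = 1\<^sub>m n"
proof -
  obtain B P Q where w: "similar_mat_wit A B P Q" and B: "B \<in> carrier_mat n n" and ut: "upper_triangular B"
     and d: "\<forall>i<n. (B $$ (i,i)) ^ m = 1" using finite_order_tri[OF A m Am] by blast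
  note w' = similar_mat_witD2[OF A w]
  have nd: "norm (B $$ (i,i)) = 1" if "i < n" for i using root_unity_norm d m that by blast
  have "(\<Sum>i<n. B $$ (i,i)) = of_nat n" using trace_pow_tri[OF w A B ut, of 1] tr A by simp
  hence "Re (\<Sum>i<n. B $$ (i,i)) = real n" by (metis Re_complex_of_real of_real_of_nat_eq)
  hence s1: "(\<Sum>i<n. Re (B $$ (i,i))) = real n" by (simp only: Re_sum)
  have "(\<Sum>i<n. 1 - Re (B $$ (i,i))) = real n - (\<Sum>i<n. Re (B $$ (i,i)))"
    unfolding sum_subtractf by simp
  hence s0: "(\<Sum>i<n. 1 - Re (B $$ (i,i))) = 0" using s1 by linarith
  have le: "\<forall>i\<in>{..<n}. 0 \<le> 1 - Re (B $$ (i,i))"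
  proof
    fix i assume "i \<in> {..<n}"
    hence "norm (B $$ (i,i)) = 1" using nd by blast
    moreover have "Re (B $$ (i,i)) \<le> norm (B $$ (i,i))" by (rule complex_Re_le_cmod)
    ultimately show "0 \<le> 1 - Re (B $$ (i,i))" by simp
  qed
  have "\<forall>i\<in>{..<n}. 1 - Re (B $$ (i,i)) = 0"
    using sum_nonneg_eq_0_iff[of "{..<n}" "\<lambda>i. 1 - Re (B $$ (i,i))"] s0 le by blast
  hence d1: "B $$ (i,i) = 1" if "i < n" for i using root_unity_re_one nd that by auto
  define M where "M = mat n n (\<lambda>(i,j). \<Sum>k<m. (B ^\<^sub>m k) $$ (i,j))"
  have M: "M \<in> carrier_mat n n" unfolding M_def by simp
  have utM: "upper_triangular M" unfolding M_def upper_triangular_def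
    using ut_pow[OF B ut] B by (auto simp: upper_triangular_def)
  have diagM: "M $$ (i,i) = of_nat m" if "i < n" for i
    unfolding M_def using that ut_pow[OF B ut] d1 by simp
  have "det M = prod_list (diag_mat M)" by (rule det_upper_triangular[OF utM M])
  also have "\<dots> = (\<Prod>i = 0..<n. M $$ (i,i))" using M by (simp add: prod_list_diag_prod)
  also have "\<dots> = (\<Prod>i = 0..<n. of_nat m)" using diagM by (intro prod.cong) auto
  finally have "det M \<noteq> 0" using m by simp
  from det_non_zero_imp_unit[OF M this, of "()"]
  obtain N where N: "N \<in> carrier_mat n n" and NM: "N * M = 1\<^sub>m n"
    unfolding Units_def ring_mat_def by auto
  have Bm: "B ^\<^sub>m m = 1\<^sub>m n"
  proof -
    have "B ^\<^sub>m m = Q * A ^\<^sub>m m * P" by (rule similar_mat_wit_pow_id[OF similar_mat_wit_sym[OF w]])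
    also have "\<dots> = 1\<^sub>m n" unfolding Am using w'(2,6,7) by simp
    finally show ?thesis .
  qed
  have MB: "M * B = M"
  proof (rule eq_matI)
    fix i j assume ij: "i < dim_row M" "j < dim_col M"
    hence ij': "i < n" "j < n" using M by auto
    have "(M * B) $$ (i,j) = (\<Sum>l<n. M $$ (i,l) * B $$ (l,j))" by (rule mult_entry[OF M B ij'])
    also have "\<dots> = (\<Sum>l<n. \<Sum>k<m. (B ^\<^sub>m k) $$ (i,l) * B $$ (l,j))"
      unfolding M_def using ij' by (simp add: sum_distrib_right)
    also have "\<dots> = (\<Sum>k<m. \<Sum>l<n. (B ^\<^sub>m k) $$ (i,l) * B $$ (l,j))" by (rule sum.swap)
    also have "\<dots> = (\<Sum>k<m. (B ^\<^sub>m (Suc k)) $$ (i,j))"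
    proof (rule sum.cong[OF refl])
      fix k
      have "(B ^\<^sub>m (Suc k)) $$ (i,j) = (B ^\<^sub>m k * B) $$ (i,j)" by simp
      also have "\<dots> = (\<Sum>l<n. (B ^\<^sub>m k) $$ (i,l) * B $$ (l,j))"
        by (rule mult_entry[OF pow_carrier_mat[OF B] B ij'])
      finally show "(\<Sum>l<n. (B ^\<^sub>m k) $$ (i,l) * B $$ (l,j)) = (B ^\<^sub>m (Suc k)) $$ (i,j)" by simp
    qed
    also have "\<dots> = (\<Sum>k<m. (B ^\<^sub>m k) $$ (i,j))"
    proof -
      have "(\<Sum>k<Suc m. (B ^\<^sub>m k) $$ (i,j)) = (\<Sum>k<m. (B ^\<^sub>m (Suc k)) $$ (i,j)) + (B ^\<^sub>m 0) $$ (i,j)"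
        by (subst sum.lessThan_Suc_shift) simp
      moreover have "(\<Sum>k<Suc m. (B ^\<^sub>m k) $$ (i,j)) = (\<Sum>k<m. (B ^\<^sub>m k) $$ (i,j)) + (B ^\<^sub>m m) $$ (i,j)"
        by simp
      moreover have "(B ^\<^sub>m m) $$ (i,j) = (B ^\<^sub>m 0) $$ (i,j)" using Bm B by simp
      ultimately show ?thesis by simp
    qed
    also have "\<dots> = M $$ (i,j)" unfolding M_def using ij' by simp
    finally show "(M * B) $$ (i,j) = M $$ (i,j)" .
  qed (use M B in auto)
  have "B = (N * M) * B" unfolding NM using B by simp
  also have "\<dots> = N * (M * B)" by (rule assoc_mult_mat[OF N M B])
  also have "\<dots> = 1\<^sub>m n" unfolding MB NM ..
  finally have B1: "B = 1\<^sub>m n" .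
  have "A = P * B * Q" by (rule w'(3))
  also have "\<dots> = P * Q" unfolding B1 using w'(6) by simp
  also have "\<dots> = 1\<^sub>m n" by (rule w'(1))
  finally show ?thesis .
qed

lemma exists_eigen:
  fixes A :: "complex mat"
  assumes A: "A \<in> carrier_mat n n" and n: "n > 0"
  shows "\<exists>e v. v \<in> carrier_vec n \<and> v \<noteq> 0\<^sub>v n \<and> A *\<^sub>v v = e \<cdot>\<^sub>v v"
proof -
  obtain as where cp: "char_poly A = (\<Prod> a \<leftarrow> as. [:- a, 1:])" and len: "length as = n"
    using char_poly_factorized[OF A] by blast
  obtain e rest where as: "as = e # rest" using len n by (cases as) auto
  have "poly (char_poly A) e = 0" unfolding cp as by simp
  hence "eigenvalue A e" using eigenvalue_root_char_poly[OF A] by simp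
  then obtain v where "eigenvector A v e" unfolding eigenvalue_def by blast
  thus ?thesis unfolding eigenvector_def using A by auto
qed

lemma mat_vec_unit_entry:
  fixes A :: "complex mat"
  assumes A: "A \<in> carrier_mat n n" and i: "i < n" and j: "j < n"
  shows "(A *\<^sub>v unit_vec n j) $ i = A $$ (i,j)"
  using A i j by (simp add: scalar_prod_def unit_vec_def row_def if_distrib cong: if_cong)

lemma schur_lemma:
  fixes \<rho> :: "'a \<Rightarrow> complex mat"
  assumes irr: "irreducible_rep G n \<rho>" and A: "A \<in> carrier_mat n n"
    and comm: "\<forall>g\<in>carrier G. A * \<rho> g = \<rho> g * A"
  shows "\<exists>c. A = c \<cdot>\<^sub>m 1\<^sub>m n"
proof -
  have rep: "is_rep G n \<rho>" and n: "n > 0"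
    and inv: "\<And>W. invariant_subspace G n \<rho> W \<Longrightarrow> W = {0\<^sub>v n} \<or> W = carrier_vec n"
    using irr unfolding irreducible_rep_def by auto
  have rc: "\<rho> g \<in> carrier_mat n n" if "g \<in> carrier G" for g using rep that unfolding is_rep_def by auto
  obtain e v where v: "v \<in> carrier_vec n" "v \<noteq> 0\<^sub>v n" "A *\<^sub>v v = e \<cdot>\<^sub>v v"
    using exists_eigen[OF A n] by blast
  define W where "W = {w \<in> carrier_vec n. A *\<^sub>v w = e \<cdot>\<^sub>v w}"
  have "invariant_subspace G n \<rho> W"
    unfolding invariant_subspace_def
  proof (intro conjI ballI allI)
    show "W \<subseteq> carrier_vec n" unfolding W_def by auto
    show "0\<^sub>v n \<in> W" unfolding W_def using A by auto
    fix x y assume x: "x \<in> W" and y: "y \<in> W"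
    show "x + y \<in> W" using x y A unfolding W_def
      by (auto simp: mult_add_distrib_mat_vec[OF A] smult_add_distrib_vec)
  next
    fix c x assume x: "x \<in> W"
    show "c \<cdot>\<^sub>v x \<in> W" using x A unfolding W_def
      by (auto simp: mult_mat_vec[OF A] smult_smult_assoc mult.commute)
  next
    fix g x assume g: "g \<in> carrier G" and x: "x \<in> W"
    have xc: "x \<in> carrier_vec n" and Ax: "A *\<^sub>v x = e \<cdot>\<^sub>v x" using x unfolding W_def by auto
    have "A *\<^sub>v (\<rho> g *\<^sub>v x) = (A * \<rho> g) *\<^sub>v x" using A rc[OF g] xc by simp
    also have "\<dots> = (\<rho> g * A) *\<^sub>v x" using comm g by simp
    also have "\<dots> = \<rho> g *\<^sub>v (A *\<^sub>v x)" using A rc[OF g] xc by simp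
    also have "\<dots> = e \<cdot>\<^sub>v (\<rho> g *\<^sub>v x)" unfolding Ax by (rule mult_mat_vec[OF rc[OF g] xc])
    finally show "\<rho> g *\<^sub>v x \<in> W" unfolding W_def using rc[OF g] xc by auto
  qed
  hence "W = {0\<^sub>v n} \<or> W = carrier_vec n" by (rule inv)
  moreover have "v \<in> W" unfolding W_def using v by auto
  ultimately have Wc: "W = carrier_vec n" using v(2) by auto
  have "A = e \<cdot>\<^sub>m 1\<^sub>m n"
  proof (rule eq_matI)
    fix i j assume ij: "i < dim_row (e \<cdot>\<^sub>m 1\<^sub>m n)" "j < dim_col (e \<cdot>\<^sub>m 1\<^sub>m n)"
    hence i: "i < n" and j: "j < n" by auto
    have "unit_vec n j \<in> W" unfolding Wc using j by simp
    hence "A *\<^sub>v unit_vec n j = e \<cdot>\<^sub>v unit_vec n j" unfolding W_def by auto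
    hence "(A *\<^sub>v unit_vec n j) $ i = (e \<cdot>\<^sub>v unit_vec n j) $ i" by simp
    thus "A $$ (i,j) = (e \<cdot>\<^sub>m 1\<^sub>m n) $$ (i,j)"
      unfolding mat_vec_unit_entry[OF A i j] using i j by (simp add: unit_vec_def)
  qed (use A in auto)
  thus ?thesis by blast
qed


lemma rep_carrier:
  assumes "is_rep G n \<rho>" "g \<in> carrier G"
  shows "\<rho> g \<in> carrier_mat n n"
  using assms unfolding is_rep_def by auto

lemma rep_mult:
  assumes "is_rep G n \<rho>" "g \<in> carrier G" "h \<in> carrier G"
  shows "\<rho> (g \<otimes>\<^bsub>G\<^esub> h) = \<rho> g * \<rho> h"
  using assms unfolding is_rep_def by auto

lemma rep_one:
  assumes "is_rep G n \<rho>"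
  shows "\<rho> \<one>\<^bsub>G\<^esub> = 1\<^sub>m n"
  using assms unfolding is_rep_def by auto

lemma rep_pow:
  assumes G: "group G" and r: "is_rep G n \<rho>" and g: "g \<in> carrier G"
  shows "\<rho> (g [^]\<^bsub>G\<^esub> (k::nat)) = \<rho> g ^\<^sub>m k"
proof (induct k)
  case 0
  then show ?case using rep_one[OF r] rep_carrier[OF r g] by simp
next
  case (Suc k)
  have "\<rho> (g [^]\<^bsub>G\<^esub> Suc k) = \<rho> (g [^]\<^bsub>G\<^esub> k \<otimes>\<^bsub>G\<^esub> g)"
    by (rule arg_cong[where f=\<rho>], rule nat_pow_Suc)
  also have "\<dots> = \<rho> (g [^]\<^bsub>G\<^esub> k) * \<rho> g"
    by (rule rep_mult[OF r _ g]) (simp add: monoid.nat_pow_closed[OF group.is_monoid[OF G] g])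
  finally show ?case using Suc by simp
qed

lemma rep_inv_mult:
  assumes G: "group G" and r: "is_rep G n \<rho>" and g: "g \<in> carrier G"
  shows "\<rho> (inv\<^bsub>G\<^esub> g) * \<rho> g = 1\<^sub>m n" "\<rho> g * \<rho> (inv\<^bsub>G\<^esub> g) = 1\<^sub>m n"
proof -
  have ig: "inv\<^bsub>G\<^esub> g \<in> carrier G" using G g by simp
  show "\<rho> (inv\<^bsub>G\<^esub> g) * \<rho> g = 1\<^sub>m n"
    using rep_mult[OF r ig g] rep_one[OF r] G g by (simp add: group.l_inv)
  show "\<rho> g * \<rho> (inv\<^bsub>G\<^esub> g) = 1\<^sub>m n"
    using rep_mult[OF r g ig] rep_one[OF r] G g by (simp add: group.r_inv)
qed

lemma finite_group_order:
  assumes G: "group G" and fin: "finite (carrier G)" and g: "g \<in> carrier G"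
  obtains m :: nat where "m > 0" "g [^]\<^bsub>G\<^esub> m = \<one>\<^bsub>G\<^esub>"
proof -
  have "group.ord G g \<ge> 1" by (rule group.ord_ge_1[OF G fin g])
  thus ?thesis using group.pow_ord_eq_1[OF G g] that[of "group.ord G g"] by simp
qed

lemma rep_finite_order:
  assumes G: "group G" and fin: "finite (carrier G)" and r: "is_rep G n \<rho>" and g: "g \<in> carrier G"
  obtains m :: nat where "m > 0" "\<rho> g ^\<^sub>m m = 1\<^sub>m n" "\<rho> (inv\<^bsub>G\<^esub> g) = \<rho> g ^\<^sub>m (m - 1)"
proof -
  obtain m :: nat where m: "m > 0" "g [^]\<^bsub>G\<^esub> m = \<one>\<^bsub>G\<^esub>" using finite_group_order[OF G fin g] by blast
  have "\<rho> g ^\<^sub>m m = 1\<^sub>m n" using rep_pow[OF G r g, of m] m rep_one[OF r] by simp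
  moreover have "inv\<^bsub>G\<^esub> g = g [^]\<^bsub>G\<^esub> (m - 1)"
  proof -
    have "g [^]\<^bsub>G\<^esub> (m - 1) \<otimes>\<^bsub>G\<^esub> g = g [^]\<^bsub>G\<^esub> m"
      using m(1) nat_pow_Suc[of G g "m - 1"] by (metis Suc_diff_1)
    hence "g [^]\<^bsub>G\<^esub> (m - 1) \<otimes>\<^bsub>G\<^esub> g = \<one>\<^bsub>G\<^esub>" using m by simp
    thus ?thesis by (rule group.inv_equality[OF G _ g monoid.nat_pow_closed[OF group.is_monoid[OF G] g]])
  qed
  hence "\<rho> (inv\<^bsub>G\<^esub> g) = \<rho> g ^\<^sub>m (m - 1)" using rep_pow[OF G r g] by simp
  ultimately show ?thesis using that m by blast
qed

definition char_of :: "('a, 'b) monoid_scheme \<Rightarrow> ('a \<Rightarrow> complex mat) \<Rightarrow> 'a \<Rightarrow> complex" where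
  "char_of G \<rho> = (\<lambda>g. if g \<in> carrier G then mat_trace (\<rho> g) else 0)"

lemma char_inv:
  assumes G: "group G" and fin: "finite (carrier G)" and r: "is_rep G n \<rho>" and g: "g \<in> carrier G"
  shows "mat_trace (\<rho> (inv\<^bsub>G\<^esub> g)) = cnj (mat_trace (\<rho> g))"
proof -
  obtain m where m: "m > 0" "\<rho> g ^\<^sub>m m = 1\<^sub>m n" "\<rho> (inv\<^bsub>G\<^esub> g) = \<rho> g ^\<^sub>m (m - 1)"
    using rep_finite_order[OF G fin r g] by blast
  show ?thesis unfolding m(3) by (rule finite_order_trace_inv[OF rep_carrier[OF r g] m(1,2)])
qed

lemma char_kernel_eq:
  assumes G: "group G" and fin: "finite (carrier G)" and r: "is_rep G n \<rho>" and g: "g \<in> carrier G"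
  shows "mat_trace (\<rho> g) = mat_trace (\<rho> \<one>\<^bsub>G\<^esub>) \<longleftrightarrow> \<rho> g = 1\<^sub>m n"
proof
  assume tr: "mat_trace (\<rho> g) = mat_trace (\<rho> \<one>\<^bsub>G\<^esub>)"
  obtain m where m: "m > 0" "\<rho> g ^\<^sub>m m = 1\<^sub>m n"
    using rep_finite_order[OF G fin r g] by blast
  have "mat_trace (\<rho> g) = of_nat n" using tr rep_one[OF r] by (simp add: mat_trace_def)
  thus "\<rho> g = 1\<^sub>m n" by (rule finite_order_trace_one[OF rep_carrier[OF r g] m])
next
  assume "\<rho> g = 1\<^sub>m n"
  thus "mat_trace (\<rho> g) = mat_trace (\<rho> \<one>\<^bsub>G\<^esub>)" using rep_one[OF r] by simp
qed


lemma sum_left_translate: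
  assumes G: "group G" and h: "h \<in> carrier G"
  shows "(\<Sum>g\<in>carrier G. F (h \<otimes>\<^bsub>G\<^esub> g)) = (\<Sum>g\<in>carrier G. (F g :: complex))"
proof (rule sum.reindex_bij_witness[where i = "\<lambda>g. inv\<^bsub>G\<^esub> h \<otimes>\<^bsub>G\<^esub> g" and j = "\<lambda>g. h \<otimes>\<^bsub>G\<^esub> g"])
  interpret group G by (rule G)
  fix a assume a: "a \<in> carrier G"
  show "inv\<^bsub>G\<^esub> h \<otimes>\<^bsub>G\<^esub> (h \<otimes>\<^bsub>G\<^esub> a) = a" using h a by (simp add: m_assoc[symmetric])
  show "inv\<^bsub>G\<^esub> h \<otimes>\<^bsub>G\<^esub> a \<in> carrier G" using G h a by simp
  show "h \<otimes>\<^bsub>G\<^esub> (inv\<^bsub>G\<^esub> h \<otimes>\<^bsub>G\<^esub> a) = a" using h a by (simp add: m_assoc[symmetric])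
  show "h \<otimes>\<^bsub>G\<^esub> a \<in> carrier G" using G h a by simp
  show "F (h \<otimes>\<^bsub>G\<^esub> a) = F (h \<otimes>\<^bsub>G\<^esub> a)" ..
qed

lemma orth_entry:
  assumes G: "group G" and fin: "finite (carrier G)" and irr: "irreducible_rep G n \<rho>"
    and i: "i < n" and j: "j < n" and k: "k < n" and l: "l < n"
  shows "(\<Sum>g\<in>carrier G. \<rho> g $$ (k,i) * \<rho> (inv\<^bsub>G\<^esub> g) $$ (j,l))
         = (if k = l \<and> i = j then of_nat (card (carrier G)) / of_nat n else 0)"
proof -
  have r: "is_rep G n \<rho>" and n: "n > 0" using irr unfolding irreducible_rep_def by auto
  note rc = rep_carrier[OF r]
  have ic: "inv\<^bsub>G\<^esub> g \<in> carrier G" if "g \<in> carrier G" for g using G that by simp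
  define T where "T = mat n n (\<lambda>(k,l). \<Sum>g\<in>carrier G. \<rho> g $$ (k,i) * \<rho> (inv\<^bsub>G\<^esub> g) $$ (j,l))"
  have T: "T \<in> carrier_mat n n" unfolding T_def by simp
  have comm: "\<forall>h\<in>carrier G. T * \<rho> h = \<rho> h * T"
  proof
    fix h assume h: "h \<in> carrier G"
    show "T * \<rho> h = \<rho> h * T"
    proof (rule eq_matI)
      fix a b assume "a < dim_row (\<rho> h * T)" "b < dim_col (\<rho> h * T)"
      hence a: "a < n" and b: "b < n" using rc[OF h] T by auto
      have "(T * \<rho> h) $$ (a,b) = (\<Sum>p<n. T $$ (a,p) * \<rho> h $$ (p,b))"
        by (rule mult_entry[OF T rc[OF h] a b])
      also have "\<dots> = (\<Sum>p<n. \<Sum>g\<in>carrier G. \<rho> g $$ (a,i) * (\<rho> (inv\<^bsub>G\<^esub> g) $$ (j,p) * \<rho> h $$ (p,b)))"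
        unfolding T_def using a by (simp add: sum_distrib_right mult.assoc)
      also have "\<dots> = (\<Sum>g\<in>carrier G. \<rho> g $$ (a,i) * (\<Sum>p<n. \<rho> (inv\<^bsub>G\<^esub> g) $$ (j,p) * \<rho> h $$ (p,b)))"
        by (subst sum.swap) (simp add: sum_distrib_left)
      also have "\<dots> = (\<Sum>g\<in>carrier G. \<rho> g $$ (a,i) * \<rho> (inv\<^bsub>G\<^esub> g \<otimes>\<^bsub>G\<^esub> h) $$ (j,b))"
      proof (rule sum.cong[OF refl])
        fix g assume g: "g \<in> carrier G"
        have "\<rho> (inv\<^bsub>G\<^esub> g \<otimes>\<^bsub>G\<^esub> h) $$ (j,b) = (\<rho> (inv\<^bsub>G\<^esub> g) * \<rho> h) $$ (j,b)"
          using rep_mult[OF r ic[OF g] h] by simp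
        also have "\<dots> = (\<Sum>p<n. \<rho> (inv\<^bsub>G\<^esub> g) $$ (j,p) * \<rho> h $$ (p,b))"
          by (rule mult_entry[OF rc[OF ic[OF g]] rc[OF h] j b])
        finally show "\<rho> g $$ (a,i) * (\<Sum>p<n. \<rho> (inv\<^bsub>G\<^esub> g) $$ (j,p) * \<rho> h $$ (p,b))
            = \<rho> g $$ (a,i) * \<rho> (inv\<^bsub>G\<^esub> g \<otimes>\<^bsub>G\<^esub> h) $$ (j,b)" by simp
      qed
      also have "\<dots> = (\<Sum>g\<in>carrier G. \<rho> (h \<otimes>\<^bsub>G\<^esub> g) $$ (a,i) * \<rho> (inv\<^bsub>G\<^esub> (h \<otimes>\<^bsub>G\<^esub> g) \<otimes>\<^bsub>G\<^esub> h) $$ (j,b))"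
        by (rule sum_left_translate[OF G h, symmetric])
      also have "\<dots> = (\<Sum>g\<in>carrier G. \<rho> (h \<otimes>\<^bsub>G\<^esub> g) $$ (a,i) * \<rho> (inv\<^bsub>G\<^esub> g) $$ (j,b))"
      proof (rule sum.cong[OF refl])
        fix g assume g: "g \<in> carrier G"
        have "inv\<^bsub>G\<^esub> (h \<otimes>\<^bsub>G\<^esub> g) \<otimes>\<^bsub>G\<^esub> h = inv\<^bsub>G\<^esub> g"
        proof -
          interpret group G by (rule G)
          show ?thesis using g h by (simp add: inv_mult_group m_assoc)
        qed
        thus "\<rho> (h \<otimes>\<^bsub>G\<^esub> g) $$ (a,i) * \<rho> (inv\<^bsub>G\<^esub> (h \<otimes>\<^bsub>G\<^esub> g) \<otimes>\<^bsub>G\<^esub> h) $$ (j,b)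
            = \<rho> (h \<otimes>\<^bsub>G\<^esub> g) $$ (a,i) * \<rho> (inv\<^bsub>G\<^esub> g) $$ (j,b)" by simp
      qed
      also have "\<dots> = (\<Sum>g\<in>carrier G. (\<Sum>p<n. \<rho> h $$ (a,p) * \<rho> g $$ (p,i)) * \<rho> (inv\<^bsub>G\<^esub> g) $$ (j,b))"
      proof (rule sum.cong[OF refl])
        fix g assume g: "g \<in> carrier G"
        have "\<rho> (h \<otimes>\<^bsub>G\<^esub> g) $$ (a,i) = (\<rho> h * \<rho> g) $$ (a,i)" using rep_mult[OF r h g] by simp
        also have "\<dots> = (\<Sum>p<n. \<rho> h $$ (a,p) * \<rho> g $$ (p,i))" by (rule mult_entry[OF rc[OF h] rc[OF g] a i])
        finally show "\<rho> (h \<otimes>\<^bsub>G\<^esub> g) $$ (a,i) * \<rho> (inv\<^bsub>G\<^esub> g) $$ (j,b)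
           = (\<Sum>p<n. \<rho> h $$ (a,p) * \<rho> g $$ (p,i)) * \<rho> (inv\<^bsub>G\<^esub> g) $$ (j,b)" by simp
      qed
      also have "\<dots> = (\<Sum>p<n. \<rho> h $$ (a,p) * (\<Sum>g\<in>carrier G. \<rho> g $$ (p,i) * \<rho> (inv\<^bsub>G\<^esub> g) $$ (j,b)))"
        by (simp add: sum_distrib_right sum_distrib_left mult.assoc) (rule sum.swap)
      also have "\<dots> = (\<Sum>p<n. \<rho> h $$ (a,p) * T $$ (p,b))"
        unfolding T_def using b by simp
      also have "\<dots> = (\<rho> h * T) $$ (a,b)" by (rule mult_entry[OF rc[OF h] T a b, symmetric])
      finally show "(T * \<rho> h) $$ (a,b) = (\<rho> h * T) $$ (a,b)" .
    qed (use rc[OF h] T in auto)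
  qed
  obtain c where Tc: "T = c \<cdot>\<^sub>m 1\<^sub>m n" using schur_lemma[OF irr T] comm by metis
  have "(\<Sum>a<n. T $$ (a,a)) = (\<Sum>g\<in>carrier G. \<Sum>a<n. \<rho> (inv\<^bsub>G\<^esub> g) $$ (j,a) * \<rho> g $$ (a,i))"
    unfolding T_def by (simp add: mult.commute) (rule sum.swap)
  also have "\<dots> = (\<Sum>g\<in>carrier G. (if j = i then 1 else 0))"
  proof (rule sum.cong[OF refl])
    fix g assume g: "g \<in> carrier G"
    have "(\<Sum>a<n. \<rho> (inv\<^bsub>G\<^esub> g) $$ (j,a) * \<rho> g $$ (a,i)) = (\<rho> (inv\<^bsub>G\<^esub> g) * \<rho> g) $$ (j,i)"
      by (rule mult_entry[OF rc[OF ic[OF g]] rc[OF g] j i, symmetric])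
    also have "\<dots> = (if j = i then 1 else 0)" using rep_inv_mult[OF G r g] i j by simp
    finally show "(\<Sum>a<n. \<rho> (inv\<^bsub>G\<^esub> g) $$ (j,a) * \<rho> g $$ (a,i)) = (if j = i then 1 else 0)" .
  qed
  finally have tr: "(\<Sum>a<n. T $$ (a,a)) = (if i = j then of_nat (card (carrier G)) else 0)" by auto
  have "(\<Sum>a<n. T $$ (a,a)) = of_nat n * c" unfolding Tc by simp
  hence c: "c = (if i = j then of_nat (card (carrier G)) / of_nat n else 0)"
    using tr n by (auto simp: field_simps)
  have "(\<Sum>g\<in>carrier G. \<rho> g $$ (k,i) * \<rho> (inv\<^bsub>G\<^esub> g) $$ (j,l)) = T $$ (k,l)"
    unfolding T_def using k l by simp
  also have "\<dots> = (if k = l then c else 0)" unfolding Tc using k l by simp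
  finally show ?thesis unfolding c by auto
qed

lemma orthogonality:
  assumes G: "group G" and fin: "finite (carrier G)" and irr: "irreducible_rep G n \<rho>"
  shows "(\<Sum>g\<in>carrier G. mat_trace (\<rho> g) * mat_trace (\<rho> (inv\<^bsub>G\<^esub> g))) = of_nat (card (carrier G))"
proof -
  have r: "is_rep G n \<rho>" and n: "n > 0" using irr unfolding irreducible_rep_def by auto
  note rc = rep_carrier[OF r]
  have ic: "inv\<^bsub>G\<^esub> g \<in> carrier G" if "g \<in> carrier G" for g using G that by simp
  have "(\<Sum>g\<in>carrier G. mat_trace (\<rho> g) * mat_trace (\<rho> (inv\<^bsub>G\<^esub> g)))
     = (\<Sum>g\<in>carrier G. \<Sum>a<n. \<Sum>b<n. \<rho> g $$ (a,a) * \<rho> (inv\<^bsub>G\<^esub> g) $$ (b,b))"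
  proof (rule sum.cong[OF refl])
    fix g assume g: "g \<in> carrier G"
    show "mat_trace (\<rho> g) * mat_trace (\<rho> (inv\<^bsub>G\<^esub> g)) = (\<Sum>a<n. \<Sum>b<n. \<rho> g $$ (a,a) * \<rho> (inv\<^bsub>G\<^esub> g) $$ (b,b))"
      unfolding mat_trace_def using rc[OF g] rc[OF ic[OF g]] by (simp add: sum_product)
  qed
  also have "\<dots> = (\<Sum>a<n. \<Sum>b<n. \<Sum>g\<in>carrier G. \<rho> g $$ (a,a) * \<rho> (inv\<^bsub>G\<^esub> g) $$ (b,b))"
    by (subst sum.swap, rule sum.cong[OF refl], rule sum.swap)
  also have "\<dots> = (\<Sum>a<n. \<Sum>b<n. (if a = b then of_nat (card (carrier G)) / of_nat n else 0))"
    by (intro sum.cong[OF refl]) (simp add: orth_entry[OF G fin irr])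
  also have "\<dots> = (\<Sum>a<n. of_nat (card (carrier G)) / of_nat n)" by simp
  also have "\<dots> = of_nat (card (carrier G))" using n by simp
  finally show ?thesis .
qed

lemma center_subgroup:
  fixes G :: "('a, 'b) monoid_scheme" (structure)
  assumes G: "group G"
  shows "subgroup (group_center G) G"
proof -
  interpret group G by (rule G)
  show ?thesis
  proof (rule subgroupI)
    show "group_center G \<subseteq> carrier G" unfolding group_center_def by auto
    show "group_center G \<noteq> {}" unfolding group_center_def by auto
  next
    fix a assume a: "a \<in> group_center G"
    hence ac: "a \<in> carrier G" and comm: "\<forall>g\<in>carrier G. a \<otimes> g = g \<otimes> a" unfolding group_center_def by auto
    have "inv a \<otimes> g = g \<otimes> inv a" if g: "g \<in> carrier G" for g
    proof -
      have ag: "a \<otimes> g = g \<otimes> a" using comm g by blast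
      have "a \<otimes> (inv a \<otimes> g) = g" using ac g by (simp add: m_assoc[symmetric])
      also have "\<dots> = (g \<otimes> a) \<otimes> inv a" using ac g by (simp add: m_assoc)
      also have "\<dots> = a \<otimes> (g \<otimes> inv a)" unfolding ag[symmetric] using ac g by (simp add: m_assoc)
      finally have "a \<otimes> (inv a \<otimes> g) = a \<otimes> (g \<otimes> inv a)" .
      thus ?thesis using ac g by simp
    qed
    thus "inv a \<in> group_center G" unfolding group_center_def using ac by auto
  next
    fix a b assume a: "a \<in> group_center G" and b: "b \<in> group_center G"
    hence ac: "a \<in> carrier G" and bc: "b \<in> carrier G" unfolding group_center_def by auto
    have "(a \<otimes> b) \<otimes> g = g \<otimes> (a \<otimes> b)" if g: "g \<in> carrier G" for g
    proof -
      have ag: "a \<otimes> g = g \<otimes> a" using a g unfolding group_center_def by blast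
      have bg: "b \<otimes> g = g \<otimes> b" using b g unfolding group_center_def by blast
      have "(a \<otimes> b) \<otimes> g = a \<otimes> (b \<otimes> g)" using ac bc g by (rule m_assoc)
      also have "\<dots> = (a \<otimes> g) \<otimes> b" unfolding bg using ac bc g by (simp only: m_assoc)
      also have "\<dots> = g \<otimes> (a \<otimes> b)" unfolding ag using ac bc g by (simp only: m_assoc)
      finally show ?thesis .
    qed
    thus "a \<otimes> b \<in> group_center G" unfolding group_center_def using ac bc by auto
  qed
qed

lemma center_scalar:
  assumes G: "group G" and irr: "irreducible_rep G n \<rho>" and z: "z \<in> group_center G"
  shows "\<exists>c. \<rho> z = c \<cdot>\<^sub>m 1\<^sub>m n"
proof -
  have r: "is_rep G n \<rho>" using irr unfolding irreducible_rep_def by auto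
  have zc: "z \<in> carrier G" and comm: "\<forall>g\<in>carrier G. z \<otimes>\<^bsub>G\<^esub> g = g \<otimes>\<^bsub>G\<^esub> z"
    using z unfolding group_center_def by auto
  show ?thesis
  proof (rule schur_lemma[OF irr rep_carrier[OF r zc]], intro ballI)
    fix g assume g: "g \<in> carrier G"
    have "\<rho> z * \<rho> g = \<rho> (z \<otimes>\<^bsub>G\<^esub> g)" using rep_mult[OF r zc g] by simp
    also have "\<dots> = \<rho> (g \<otimes>\<^bsub>G\<^esub> z)" using comm g by simp
    also have "\<dots> = \<rho> g * \<rho> z" using rep_mult[OF r g zc] by simp
    finally show "\<rho> z * \<rho> g = \<rho> g * \<rho> z" .
  qed
qed

lemma center_term:
  assumes G: "group G" and irr: "irreducible_rep G n \<rho>" and z: "z \<in> group_center G"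
  shows "mat_trace (\<rho> z) * mat_trace (\<rho> (inv\<^bsub>G\<^esub> z)) = of_nat n ^ 2"
proof -
  have r: "is_rep G n \<rho>" and n: "n > 0" using irr unfolding irreducible_rep_def by auto
  have zc: "z \<in> carrier G" using z unfolding group_center_def by auto
  have zi: "inv\<^bsub>G\<^esub> z \<in> group_center G" using subgroup.m_inv_closed[OF center_subgroup[OF G] z] G zc
    by (simp add: group.m_inv_consistent)
  obtain c where c: "\<rho> z = c \<cdot>\<^sub>m 1\<^sub>m n" using center_scalar[OF G irr z] by blast
  obtain d where d: "\<rho> (inv\<^bsub>G\<^esub> z) = d \<cdot>\<^sub>m 1\<^sub>m n" using center_scalar[OF G irr zi] by blast
  have "(c \<cdot>\<^sub>m 1\<^sub>m n) * (d \<cdot>\<^sub>m 1\<^sub>m n) = 1\<^sub>m n" using rep_inv_mult(2)[OF G r zc] c d by simp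
  hence "((c \<cdot>\<^sub>m 1\<^sub>m n) * (d \<cdot>\<^sub>m 1\<^sub>m n)) $$ (0,0) = (1\<^sub>m n :: complex mat) $$ (0,0)" by simp
  hence cd: "c * d = 1" using n by (simp add: mult_entry[of _ n n _ n] sum.delta mult.commute)
  have "mat_trace (\<rho> z) = of_nat n * c" unfolding c mat_trace_def by simp
  moreover have "mat_trace (\<rho> (inv\<^bsub>G\<^esub> z)) = of_nat n * d" unfolding d mat_trace_def by simp
  ultimately show ?thesis using cd by (simp add: power2_eq_square algebra_simps)
qed


lemma dim1_irreducible:
  assumes r: "is_rep H 1 \<sigma>"
  shows "irreducible_rep H 1 \<sigma>"
  unfolding irreducible_rep_def
proof (intro conjI allI impI)
  show "is_rep H 1 \<sigma>" by (rule r)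
  show "(0::nat) < 1" by simp
  fix W assume W: "invariant_subspace H 1 \<sigma> W"
  hence Wc: "W \<subseteq> carrier_vec 1" and sm: "\<forall>c. \<forall>v\<in>W. c \<cdot>\<^sub>v v \<in> W" and z: "0\<^sub>v 1 \<in> W"
    unfolding invariant_subspace_def by auto
  show "W = {0\<^sub>v 1} \<or> W = carrier_vec 1"
  proof (cases "W = {0\<^sub>v 1}")
    case False
    then obtain w where w: "w \<in> W" "w \<noteq> 0\<^sub>v 1" using z by blast
    have wc: "w \<in> carrier_vec 1" using w Wc by auto
    have w0: "w $ 0 \<noteq> 0"
    proof
      assume "w $ 0 = 0"
      hence "w = 0\<^sub>v 1" using wc by (intro eq_vecI) auto
      thus False using w by simp
    qed
    have "carrier_vec 1 \<subseteq> W"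
    proof
      fix v :: "complex vec" assume v: "v \<in> carrier_vec 1"
      have "v = (v $ 0 / w $ 0) \<cdot>\<^sub>v w" using v wc w0 by (intro eq_vecI) auto
      thus "v \<in> W" using sm w by metis
    qed
    thus ?thesis using Wc by blast
  qed simp
qed

lemma vanish_fully_ramified:
  assumes G: "group G" and fin: "finite (carrier G)" and irr: "irreducible_rep G n \<rho>"
    and van: "\<forall>g\<in>carrier G. g \<notin> group_center G \<longrightarrow> mat_trace (\<rho> g) = 0"
  shows "fully_ramified G (\<lambda>g. if g \<in> carrier G then mat_trace (\<rho> g) else 0)"
proof -
  define Z where "Z = group_center G"
  define \<chi> where "\<chi> = (\<lambda>g. if g \<in> carrier G then mat_trace (\<rho> g) else 0)"
  have r: "is_rep G n \<rho>" and n: "n > 0" using irr unfolding irreducible_rep_def by auto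
  have ZG: "Z \<subseteq> carrier G" unfolding Z_def group_center_def by auto
  have one: "\<one>\<^bsub>G\<^esub> \<in> carrier G" by (rule monoid.one_closed[OF group.is_monoid[OF G]])
  have chi1: "\<chi> \<one>\<^bsub>G\<^esub> = of_nat n" unfolding \<chi>_def using one rep_one[OF r] by (simp add: mat_trace_def)
  define cz where "cz z = (SOME c. \<rho> z = c \<cdot>\<^sub>m 1\<^sub>m n)" for z
  have cz: "\<rho> z = cz z \<cdot>\<^sub>m 1\<^sub>m n" if "z \<in> Z" for z
    unfolding cz_def using center_scalar[OF G irr that[unfolded Z_def]] by (rule someI_ex)
  have cz_entry: "(\<rho> z) $$ (0,0) = cz z" if "z \<in> Z" for z using cz[OF that] n by simp
  define \<sigma> where "\<sigma> z = mat 1 1 (\<lambda>_. cz z)" for z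
  define H where "H = G\<lparr>carrier := Z\<rparr>"
  have oneZ: "\<one>\<^bsub>G\<^esub> \<in> Z" unfolding Z_def group_center_def
    using one monoid.l_one[OF group.is_monoid[OF G]] monoid.r_one[OF group.is_monoid[OF G]] by simp
  have multZ: "z \<otimes>\<^bsub>G\<^esub> w \<in> Z" if "z \<in> Z" "w \<in> Z" for z w
    using subgroup.m_closed[OF center_subgroup[OF G]] that unfolding Z_def by blast
  have rep\<sigma>: "is_rep H 1 \<sigma>"
    unfolding is_rep_def
  proof (intro conjI ballI)
    fix g assume "g \<in> carrier H"
    show "\<sigma> g \<in> carrier_mat 1 1" unfolding \<sigma>_def by simp
  next
    have "cz \<one>\<^bsub>G\<^esub> = 1" using cz_entry[OF oneZ] rep_one[OF r] n by simp
    thus "\<sigma> \<one>\<^bsub>H\<^esub> = 1\<^sub>m 1" unfolding \<sigma>_def H_def by (intro eq_matI) auto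
  next
    fix g h assume g: "g \<in> carrier H" and h: "h \<in> carrier H"
    hence gZ: "g \<in> Z" and hZ: "h \<in> Z" unfolding H_def by auto
    have gc: "g \<in> carrier G" and hc: "h \<in> carrier G" using gZ hZ ZG by auto
    have "cz (g \<otimes>\<^bsub>G\<^esub> h) = (\<rho> (g \<otimes>\<^bsub>G\<^esub> h)) $$ (0,0)"
      by (rule cz_entry[OF multZ[OF gZ hZ], symmetric])
    also have "\<dots> = (\<rho> g * \<rho> h) $$ (0,0)" unfolding rep_mult[OF r gc hc] ..
    also have "\<dots> = cz g * cz h" unfolding cz[OF gZ] cz[OF hZ] using n
      by (simp add: mult_entry[of _ n n _ n] sum.delta)
    finally have e: "cz (g \<otimes>\<^bsub>G\<^esub> h) = cz g * cz h" .
    show "\<sigma> (g \<otimes>\<^bsub>H\<^esub> h) = \<sigma> g * \<sigma> h"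
      unfolding \<sigma>_def H_def using e by (intro eq_matI) (auto simp: scalar_prod_def)
  qed
  define lam where "lam = (\<lambda>g. if g \<in> carrier H then mat_trace (\<sigma> g) else 0)"
  have lamIrr: "lam \<in> Irr H" unfolding Irr_def lam_def using dim1_irreducible[OF rep\<sigma>] by blast
  have lamz: "\<forall>z\<in>Z. \<chi> z = \<chi> \<one>\<^bsub>G\<^esub> * lam z"
  proof
    fix z assume z: "z \<in> Z"
    have "\<chi> z = mat_trace (cz z \<cdot>\<^sub>m 1\<^sub>m n)" unfolding \<chi>_def using z ZG cz[OF z] by auto
    also have "\<dots> = of_nat n * cz z" unfolding mat_trace_def by simp
    also have "lam z = cz z" unfolding lam_def H_def \<sigma>_def mat_trace_def using z by simp
    ultimately show "\<chi> z = \<chi> \<one>\<^bsub>G\<^esub> * lam z" unfolding chi1 by simp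
  qed
  have "of_nat (card (carrier G)) = (\<Sum>g\<in>carrier G. mat_trace (\<rho> g) * mat_trace (\<rho> (inv\<^bsub>G\<^esub> g)))"
    by (rule orthogonality[OF G fin irr, symmetric])
  also have "\<dots> = (\<Sum>g\<in>Z. mat_trace (\<rho> g) * mat_trace (\<rho> (inv\<^bsub>G\<^esub> g)))"
    by (rule sum.mono_neutral_right[OF fin ZG]) (use van Z_def in auto)
  also have "\<dots> = (\<Sum>g\<in>Z. of_nat n ^ 2)"
    by (rule sum.cong[OF refl]) (use center_term[OF G irr] Z_def in auto)
  also have "\<dots> = of_nat (card Z * n ^ 2)" by simp
  finally have "card (carrier G) = card Z * n ^ 2" by (simp only: of_nat_eq_iff)
  moreover have "card Z > 0" using oneZ ZG fin by (auto simp: card_gt_0_iff intro: finite_subset)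
  ultimately have "card (carrier G) div card Z = n ^ 2" by simp
  hence "(\<chi> \<one>\<^bsub>G\<^esub>)\<^sup>2 = of_nat (card (carrier G) div card Z)" unfolding chi1 by simp
  thus ?thesis unfolding fully_ramified_def \<chi>_def[symmetric] Z_def[symmetric] H_def[symmetric]
    using lamIrr lamz by blast
qed


lemma fully_ramified_vanish:
  assumes G: "group G" and fin: "finite (carrier G)" and irr: "irreducible_rep G n \<rho>"
    and fr: "fully_ramified G (\<lambda>g. if g \<in> carrier G then mat_trace (\<rho> g) else 0)"
  shows "\<forall>g\<in>carrier G. g \<notin> group_center G \<longrightarrow> mat_trace (\<rho> g) = 0"
proof -
  define Z where "Z = group_center G"
  have r: "is_rep G n \<rho>" and n: "n > 0" using irr unfolding irreducible_rep_def by auto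
  have ZG: "Z \<subseteq> carrier G" unfolding Z_def group_center_def by auto
  have one: "\<one>\<^bsub>G\<^esub> \<in> carrier G" by (rule monoid.one_closed[OF group.is_monoid[OF G]])
  have "(mat_trace (\<rho> \<one>\<^bsub>G\<^esub>))\<^sup>2 = of_nat (card (carrier G) div card Z)"
    using fr one unfolding fully_ramified_def Z_def by simp
  hence "(of_nat n :: complex)\<^sup>2 = of_nat (card (carrier G) div card Z)"
    using rep_one[OF r] by (simp add: mat_trace_def)
  hence nd: "n ^ 2 = card (carrier G) div card Z" by (metis of_nat_eq_iff of_nat_power)
  have "card (rcosets\<^bsub>G\<^esub> Z) * card Z = card (carrier G)"
    using group.lagrange[OF G center_subgroup[OF G]] unfolding Z_def Coset.order_def by simp
  hence dv: "card Z dvd card (carrier G)" by (metis dvd_triv_right)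
  have cardG: "card (carrier G) = card Z * n ^ 2" using nd dv by simp
  have "of_nat (card (carrier G)) = (\<Sum>g\<in>carrier G. mat_trace (\<rho> g) * mat_trace (\<rho> (inv\<^bsub>G\<^esub> g)))"
    by (rule orthogonality[OF G fin irr, symmetric])
  also have "\<dots> = (\<Sum>g\<in>Z. mat_trace (\<rho> g) * mat_trace (\<rho> (inv\<^bsub>G\<^esub> g)))
       + (\<Sum>g\<in>carrier G - Z. mat_trace (\<rho> g) * mat_trace (\<rho> (inv\<^bsub>G\<^esub> g)))"
    using sum.subset_diff[OF ZG fin] by (simp add: add.commute)
  also have "(\<Sum>g\<in>Z. mat_trace (\<rho> g) * mat_trace (\<rho> (inv\<^bsub>G\<^esub> g))) = (\<Sum>g\<in>Z. of_nat n ^ 2)"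
    by (rule sum.cong[OF refl]) (use center_term[OF G irr] Z_def in auto)
  also have "\<dots> = of_nat (card (carrier G))" unfolding cardG by simp
  finally have s0: "(\<Sum>g\<in>carrier G - Z. mat_trace (\<rho> g) * mat_trace (\<rho> (inv\<^bsub>G\<^esub> g))) = 0" by simp
  have "(\<Sum>g\<in>carrier G - Z. mat_trace (\<rho> g) * mat_trace (\<rho> (inv\<^bsub>G\<^esub> g)))
      = (\<Sum>g\<in>carrier G - Z. complex_of_real ((cmod (mat_trace (\<rho> g)))\<^sup>2))"
  proof (rule sum.cong[OF refl])
    fix g assume "g \<in> carrier G - Z"
    hence g: "g \<in> carrier G" by auto
    show "mat_trace (\<rho> g) * mat_trace (\<rho> (inv\<^bsub>G\<^esub> g)) = complex_of_real ((cmod (mat_trace (\<rho> g)))\<^sup>2)"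
      unfolding char_inv[OF G fin r g] by (rule complex_norm_square[symmetric])
  qed
  also have "\<dots> = complex_of_real (\<Sum>g\<in>carrier G - Z. (cmod (mat_trace (\<rho> g)))\<^sup>2)" by simp
  finally have eq: "(\<Sum>g\<in>carrier G - Z. mat_trace (\<rho> g) * mat_trace (\<rho> (inv\<^bsub>G\<^esub> g)))
     = complex_of_real (\<Sum>g\<in>carrier G - Z. (cmod (mat_trace (\<rho> g)))\<^sup>2)" .
  have "complex_of_real (\<Sum>g\<in>carrier G - Z. (cmod (mat_trace (\<rho> g)))\<^sup>2) = 0" using eq s0 by metis
  hence "(\<Sum>g\<in>carrier G - Z. (cmod (mat_trace (\<rho> g)))\<^sup>2) = 0" by (simp only: of_real_eq_0_iff)
  hence "\<forall>g\<in>carrier G - Z. (cmod (mat_trace (\<rho> g)))\<^sup>2 = 0"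
    using sum_nonneg_eq_0_iff[of "carrier G - Z" "\<lambda>g. (cmod (mat_trace (\<rho> g)))\<^sup>2"] fin by auto
  thus ?thesis unfolding Z_def by auto
qed

lemma kernel_char:
  assumes G: "group G" and fin: "finite (carrier G)" and irr: "irreducible_rep G n \<rho>"
  shows "char_kernel G (\<lambda>g. if g \<in> carrier G then mat_trace (\<rho> g) else 0) = {g \<in> carrier G. \<rho> g = 1\<^sub>m n}"
proof -
  have r: "is_rep G n \<rho>" using irr unfolding irreducible_rep_def by auto
  have one: "\<one>\<^bsub>G\<^esub> \<in> carrier G" by (rule monoid.one_closed[OF group.is_monoid[OF G]])
  show ?thesis unfolding char_kernel_def using char_kernel_eq[OF G fin r] one by auto
qed

lemma kernel_normal:
  assumes G: "group G" and r: "is_rep G n \<rho>"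
  shows "{g \<in> carrier G. \<rho> g = 1\<^sub>m n} \<lhd> G"
proof -
  interpret group G by (rule G)
  let ?K = "{g \<in> carrier G. \<rho> g = 1\<^sub>m n}"
  have sg: "subgroup ?K G"
  proof (rule subgroupI)
    show "?K \<subseteq> carrier G" by auto
    show "?K \<noteq> {}" using rep_one[OF r] by auto
  next
    fix a assume a: "a \<in> ?K"
    have "\<rho> (inv\<^bsub>G\<^esub> a) = \<rho> (inv\<^bsub>G\<^esub> a) * \<rho> a" using a rep_carrier[OF r, of "inv\<^bsub>G\<^esub> a"] by simp
    also have "\<dots> = 1\<^sub>m n" by (rule rep_inv_mult(1)[OF G r]) (use a in simp)
    finally show "inv\<^bsub>G\<^esub> a \<in> ?K" using a by simp
  next
    fix a b assume "a \<in> ?K" "b \<in> ?K"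
    thus "a \<otimes>\<^bsub>G\<^esub> b \<in> ?K" using rep_mult[OF r, of a b] by simp
  qed
  show ?thesis unfolding normal_inv_iff
  proof (intro conjI sg ballI)
    fix x h assume x: "x \<in> carrier G" and h: "h \<in> ?K"
    have "\<rho> (x \<otimes>\<^bsub>G\<^esub> h \<otimes>\<^bsub>G\<^esub> inv\<^bsub>G\<^esub> x) = \<rho> x * \<rho> h * \<rho> (inv\<^bsub>G\<^esub> x)"
      using rep_mult[OF r] x h by simp
    also have "\<dots> = \<rho> x * \<rho> (inv\<^bsub>G\<^esub> x)" using h rep_carrier[OF r x] by simp
    also have "\<dots> = 1\<^sub>m n" using rep_inv_mult[OF G r x] by simp
    finally show "x \<otimes>\<^bsub>G\<^esub> h \<otimes>\<^bsub>G\<^esub> inv\<^bsub>G\<^esub> x \<in> ?K" using x h by simp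
  qed
qed

lemma Irr_E:
  assumes "\<chi> \<in> Irr G"
  obtains n \<rho> where "irreducible_rep G n \<rho>" "\<chi> = (\<lambda>g. if g \<in> carrier G then mat_trace (\<rho> g) else 0)"
  using assms unfolding Irr_def by blast

lemma kernel_facts:
  assumes G: "group G" and fin: "finite (carrier G)" and chi: "\<chi> \<in> Irr G"
  shows "char_kernel G \<chi> \<lhd> G"
proof -
  obtain n \<rho> where irr: "irreducible_rep G n \<rho>" and c: "\<chi> = (\<lambda>g. if g \<in> carrier G then mat_trace (\<rho> g) else 0)"
    using chi by (rule Irr_E)
  have r: "is_rep G n \<rho>" using irr unfolding irreducible_rep_def by auto
  show ?thesis unfolding c kernel_char[OF G fin irr] by (rule kernel_normal[OF G r])
qed

theorem theoremH:
  fixes G :: "('a, 'b) monoid_scheme"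
  assumes "group G" and "finite (carrier G)"
  shows "(\<forall>\<chi> \<in> Irr_over G (U_grp G). fully_ramified G \<chi>) \<and>
         (\<forall>H. subgroup H G \<longrightarrow> (\<forall>\<chi> \<in> Irr_over G H. fully_ramified G \<chi>) \<longrightarrow> H \<subseteq> U_grp G)"
proof
  note G = assms(1) and fin = assms(2)
  interpret group G by (rule G)
  define Z where "Z = group_center G"
  define S where "S = {H. H \<lhd> G \<and> V_sub G H \<subseteq> Z}"
  have U: "U_grp G = generate G (\<Union>S)" unfolding U_grp_def U_sub_def S_def Z_def ..
  have Zsg: "subgroup Z G" unfolding Z_def by (rule center_subgroup[OF G])
  show "\<forall>\<chi> \<in> Irr_over G (U_grp G). fully_ramified G \<chi>"
  proof
    fix \<chi> assume chi: "\<chi> \<in> Irr_over G (U_grp G)"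
    hence chiI: "\<chi> \<in> Irr G" and nU: "\<not> U_grp G \<subseteq> char_kernel G \<chi>" unfolding Irr_over_def by auto
    obtain n \<rho> where irr: "irreducible_rep G n \<rho>" and c: "\<chi> = (\<lambda>g. if g \<in> carrier G then mat_trace (\<rho> g) else 0)"
      using chiI by (rule Irr_E)
    have ksg: "subgroup (char_kernel G \<chi>) G"
      using kernel_facts[OF G fin chiI] by (rule normal_imp_subgroup)
    have "\<exists>H\<in>S. \<not> H \<subseteq> char_kernel G \<chi>"
    proof (rule ccontr)
      assume "\<not> ?thesis"
      hence "\<Union>S \<subseteq> char_kernel G \<chi>" by auto
      hence "U_grp G \<subseteq> char_kernel G \<chi>" unfolding U by (rule generate_subgroup_incl[OF _ ksg])
      thus False using nU by blast
    qed
    then obtain H where HS: "H \<in> S" and nH: "\<not> H \<subseteq> char_kernel G \<chi>" by blast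
    have chiH: "\<chi> \<in> Irr_over G H" unfolding Irr_over_def using chiI nH by blast
    have VZ: "V_sub G H \<subseteq> Z" using HS unfolding S_def by blast
    have "\<forall>g\<in>carrier G. g \<notin> group_center G \<longrightarrow> mat_trace (\<rho> g) = 0"
    proof (intro ballI impI)
      fix g assume g: "g \<in> carrier G" and gZ: "g \<notin> group_center G"
      show "mat_trace (\<rho> g) = 0"
      proof (rule ccontr)
        assume ne: "mat_trace (\<rho> g) \<noteq> 0"
        hence "\<chi> g \<noteq> 0" unfolding c using g by simp
        hence "g \<in> {g \<in> carrier G. \<exists>\<chi> \<in> Irr_over G H. \<chi> g \<noteq> 0}" using g chiH by blast
        hence "g \<in> V_sub G H" unfolding V_sub_def by (rule generate.incl)
        thus False using VZ gZ unfolding Z_def by blast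
      qed
    qed
    thus "fully_ramified G \<chi>" unfolding c by (rule vanish_fully_ramified[OF G fin irr])
  qed
  show "\<forall>H. subgroup H G \<longrightarrow> (\<forall>\<chi> \<in> Irr_over G H. fully_ramified G \<chi>) \<longrightarrow> H \<subseteq> U_grp G"
  proof (intro allI impI)
    fix H assume Hsg: "subgroup H G" and fr: "\<forall>\<chi> \<in> Irr_over G H. fully_ramified G \<chi>"
    define N where "N = {g \<in> carrier G. \<forall>\<chi>\<in>Irr G. H \<subseteq> char_kernel G \<chi> \<longrightarrow> g \<in> char_kernel G \<chi>}"
    have HN: "H \<subseteq> N" unfolding N_def using subgroup.subset[OF Hsg] by blast
    have Nn: "N \<lhd> G"
      unfolding normal_inv_iff
    proof (intro conjI ballI)
      show "subgroup N G"
      proof (rule subgroupI)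
        show "N \<subseteq> carrier G" unfolding N_def by auto
        have "\<one>\<^bsub>G\<^esub> \<in> N" unfolding N_def char_kernel_def by auto
        thus "N \<noteq> {}" by blast
      next
        fix a assume a: "a \<in> N"
        show "inv\<^bsub>G\<^esub> a \<in> N" unfolding N_def
        proof (intro CollectI conjI ballI impI)
          show "inv\<^bsub>G\<^esub> a \<in> carrier G" using a unfolding N_def by auto
          fix \<chi> assume chi: "\<chi> \<in> Irr G" and Hk: "H \<subseteq> char_kernel G \<chi>"
          have "a \<in> char_kernel G \<chi>" using a chi Hk unfolding N_def by blast
          thus "inv\<^bsub>G\<^esub> a \<in> char_kernel G \<chi>"
            using subgroup.m_inv_closed[OF normal_imp_subgroup[OF kernel_facts[OF G fin chi]]] by blast
        qed
      next
        fix a b assume a: "a \<in> N" and b: "b \<in> N"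
        show "a \<otimes>\<^bsub>G\<^esub> b \<in> N" unfolding N_def
        proof (intro CollectI conjI ballI impI)
          show "a \<otimes>\<^bsub>G\<^esub> b \<in> carrier G" using a b unfolding N_def by auto
          fix \<chi> assume chi: "\<chi> \<in> Irr G" and Hk: "H \<subseteq> char_kernel G \<chi>"
          have "a \<in> char_kernel G \<chi>" "b \<in> char_kernel G \<chi>" using a b chi Hk unfolding N_def by blast+
          thus "a \<otimes>\<^bsub>G\<^esub> b \<in> char_kernel G \<chi>"
            using subgroup.m_closed[OF normal_imp_subgroup[OF kernel_facts[OF G fin chi]]] by blast
        qed
      qed
    next
      fix x h assume x: "x \<in> carrier G" and h: "h \<in> N"
      show "x \<otimes>\<^bsub>G\<^esub> h \<otimes>\<^bsub>G\<^esub> inv\<^bsub>G\<^esub> x \<in> N" unfolding N_def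
      proof (intro CollectI conjI ballI impI)
        show "x \<otimes>\<^bsub>G\<^esub> h \<otimes>\<^bsub>G\<^esub> inv\<^bsub>G\<^esub> x \<in> carrier G" using x h unfolding N_def by auto
        fix \<chi> assume chi: "\<chi> \<in> Irr G" and Hk: "H \<subseteq> char_kernel G \<chi>"
        have "h \<in> char_kernel G \<chi>" using h chi Hk unfolding N_def by blast
        thus "x \<otimes>\<^bsub>G\<^esub> h \<otimes>\<^bsub>G\<^esub> inv\<^bsub>G\<^esub> x \<in> char_kernel G \<chi>"
          using kernel_facts[OF G fin chi] x unfolding normal_inv_iff by blast
      qed
    qed
    have "V_sub G N \<subseteq> Z" unfolding V_sub_def
    proof (rule generate_subgroup_incl[OF _ Zsg], rule subsetI)
      fix g assume "g \<in> {g \<in> carrier G. \<exists>\<chi>\<in>Irr_over G N. \<chi> g \<noteq> 0}"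
      then obtain \<chi> where g: "g \<in> carrier G" and chiN: "\<chi> \<in> Irr_over G N" and ne: "\<chi> g \<noteq> 0" by blast
      have chiI: "\<chi> \<in> Irr G" and nN: "\<not> N \<subseteq> char_kernel G \<chi>" using chiN unfolding Irr_over_def by auto
      have "\<not> H \<subseteq> char_kernel G \<chi>"
      proof
        assume "H \<subseteq> char_kernel G \<chi>"
        hence "N \<subseteq> char_kernel G \<chi>" unfolding N_def using chiI by blast
        thus False using nN by blast
      qed
      hence "\<chi> \<in> Irr_over G H" unfolding Irr_over_def using chiI by blast
      hence frc: "fully_ramified G \<chi>" using fr by blast
      obtain n \<rho> where irr: "irreducible_rep G n \<rho>" and c: "\<chi> = (\<lambda>g. if g \<in> carrier G then mat_trace (\<rho> g) else 0)"
        using chiI by (rule Irr_E)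
      have van: "\<forall>g\<in>carrier G. g \<notin> group_center G \<longrightarrow> mat_trace (\<rho> g) = 0"
        by (rule fully_ramified_vanish[OF G fin irr frc[unfolded c]])
      show "g \<in> Z" using van g ne unfolding c Z_def by auto
    qed
    hence "N \<in> S" unfolding S_def using Nn by blast
    hence "N \<subseteq> U_grp G" unfolding U by (auto intro: generate.incl)
    thus "H \<subseteq> U_grp G" using HN by blast
  qed
qed

end
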